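(* A subset $S\subseteq N^{\mathbb N}$ is a safety constraint if and only if there exists $P\in\Omega$ (a prefix-free subset of $N^+$) such that $S=C_\omega(P)$, where $\omega$ is the final detector.
   Context: Fix a finite nonempty set $N$; $N^+$ is the set of nonempty finite words, $N^{\mathbb N}$ the set of streams; $s[0{:}m]$ is the prefix of length $m$, $s[m{:}]$ the suffix $k\mapsto s(k+m)$; for a set $A$ of words, $n^{-1}\cdot A=\{u:nu\in A\}$; a set of words is prefix-free if no proper prefix (including the empty word) of a member is a member. A safety constraint is a set $S\subseteq N^{\mathbb N}$ such that any $s$ with "for every $m$ there is $s'\in S$ with $s'[0{:}m]=s[0{:}m]$" belongs to $S$. Let $\mathbf 1=\{\Downarrow\}$. A detector is a set $|a|$ with $a:|a|\to(\mathbf 1+|a|)^N$. The final detector $\omega$ has carrier $\Omega$, the set of prefix-free subsets of $N^+$, with $\omega(P)(n)=\Downarrow$ if $n\in P$ and $n^{-1}\cdot P$ otherwise. For $s\in N^{\mathbb N}$, $\mathrm{Join}([s],a)$ maps $(t,y)\in\{s[k{:}]\}\times|a|$ to $\Downarrow$ if $a(y)(t(0))=\Downarrow$, else to $(t[1{:}],a(y)(t(0)))$; iterates $g^{(1)}=g$, $g^{(k+1)}(z)=\Downarrow$ if $g^{(k)}(z)=\Downarrow$, else $g(g^{(k)}(z))$. $C_a(x)=\{s\in N^{\mathbb N}:\mathrm{Join}([s],a)^{(k)}(s,x)\neq\Downarrow\ \forall k\ge1\}$. *)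

theory Defs
  imports Main
begin

text \<open>Streams over N are functions nat => 'n; words are lists. The terminal value
  (Downarrow) of 1 + X is represented by None, and x in X by Some x.\<close>

definition safety :: "(nat \<Rightarrow> 'n) set \<Rightarrow> bool" where
  "safety S \<longleftrightarrow> (\<forall>s. (\<forall>m. \<exists>s'\<in>S. \<forall>i<m. s' i = s i) \<longrightarrow> s \<in> S)"

definition prefix_free :: "'n list set \<Rightarrow> bool" where
  "prefix_free A \<longleftrightarrow> (\<forall>w\<in>A. \<forall>k<length w. take k w \<notin> A)"

definition Omega :: "'n list set set" where
  "Omega = {P. P \<subseteq> {w. w \<noteq> []} \<and> prefix_free P}"

definition lquot :: "'n \<Rightarrow> 'n list set \<Rightarrow> 'n list set" where
  "lquot n A = {u. n # u \<in> A}"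

definition omega :: "'n list set \<Rightarrow> 'n \<Rightarrow> 'n list set option" where
  "omega P n = (if [n] \<in> P then None else Some (lquot n P))"

definition Join :: "('x \<Rightarrow> 'n \<Rightarrow> 'x option) \<Rightarrow> (nat \<Rightarrow> 'n) \<times> 'x \<Rightarrow> ((nat \<Rightarrow> 'n) \<times> 'x) option" where
  "Join a z = (case a (snd z) (fst z 0) of None \<Rightarrow> None
                | Some y' \<Rightarrow> Some (\<lambda>k. fst z (Suc k), y'))"

primrec iter :: "('z \<Rightarrow> 'z option) \<Rightarrow> nat \<Rightarrow> 'z \<Rightarrow> 'z option" where
  "iter g 0 z = Some z"
| "iter g (Suc k) z = (case iter g k z of None \<Rightarrow> None | Some z' \<Rightarrow> g z')"

definition C :: "('x \<Rightarrow> 'n \<Rightarrow> 'x option) \<Rightarrow> 'x \<Rightarrow> (nat \<Rightarrow> 'n) set" where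
  "C a x = {s. \<forall>k\<ge>1. iter (Join a) k (s, x) \<noteq> None}"

end

theory Submission
  imports Defs
begin
lemma iter_omega:
  "iter (Join omega) k (s, P) =
    (if \<exists>j\<in>{1..k}. map s [0..<j] \<in> P then None
     else Some (\<lambda>i. s (i + k), {u. map s [0..<k] @ u \<in> P}))"
proof (induction k)
  case 0
  then show ?case by simp
next
  case (Suc k)
  show ?case
  proof (cases "\<exists>j\<in>{1..k}. map s [0..<j] \<in> P")
    case True
    then have "\<exists>j\<in>{1..Suc k}. map s [0..<j] \<in> P" by force
    then show ?thesis using Suc True by simp
  next
    case False
    have e: "map s [0..<Suc k] = map s [0..<k] @ [s k]" by simp
    have it: "iter (Join omega) k (s, P) = Some (\<lambda>i. s (i + k), {u. map s [0..<k] @ u \<in> P})"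
      using Suc False by simp
    have iff: "(\<exists>j\<in>{1..Suc k}. map s [0..<j] \<in> P) \<longleftrightarrow> map s [0..<Suc k] \<in> P"
      using False by (metis atLeastAtMost_iff le_Suc_eq le_add1 plus_1_eq_Suc)
    show ?thesis
      unfolding iff iter.simps it e
      by (simp add: Join_def omega_def lquot_def)
  qed
qed

lemma C_omega: "C omega P = {s. \<forall>j\<ge>1. map s [0..<j] \<notin> P}"
proof -
  have "(\<forall>k\<ge>1. iter (Join omega) k (s, P) \<noteq> None) \<longleftrightarrow> (\<forall>j\<ge>1. map s [0..<j] \<notin> P)" for s
  proof
    assume h: "\<forall>k\<ge>1. iter (Join omega) k (s, P) \<noteq> None"
    show "\<forall>j\<ge>1. map s [0..<j] \<notin> P"
    proof (intro allI impI)
      fix j :: nat assume "1 \<le> j"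
      with h have "iter (Join omega) j (s, P) \<noteq> None" by blast
      then have "\<not> (\<exists>j'\<in>{1..j}. map s [0..<j'] \<in> P)" unfolding iter_omega by (simp split: if_splits)
      with \<open>1 \<le> j\<close> show "map s [0..<j] \<notin> P" by auto
    qed
  next
    assume h: "\<forall>j\<ge>1. map s [0..<j] \<notin> P"
    show "\<forall>k\<ge>1. iter (Join omega) k (s, P) \<noteq> None"
    proof (intro allI impI)
      fix k :: nat
      have "\<not> (\<exists>j'\<in>{1..k}. map s [0..<j'] \<in> P)" using h by auto
      then show "iter (Join omega) k (s, P) \<noteq> None" unfolding iter_omega by simp
    qed
  qed
  then show ?thesis unfolding C_def by blast
qed

lemma map_upt_eq: "(map s' [0..<m] = map s [0..<m]) \<longleftrightarrow> (\<forall>i<m. s' i = s i)"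
  by (simp add: list_eq_iff_nth_eq)

theorem mainTheorem13:
  fixes S :: "(nat \<Rightarrow> 'n::finite) set"
  shows "safety S \<longleftrightarrow> (\<exists>P\<in>Omega. S = C omega P)"
proof
  assume saf: "safety S"
  define bad where "bad w \<longleftrightarrow> \<not> (\<exists>s\<in>S. map s [0..<length w] = w)" for w :: "'n list"
  define P where "P = {w. w \<noteq> [] \<and> bad w \<and> (\<forall>k. 1 \<le> k \<and> k < length w \<longrightarrow> \<not> bad (take k w))}"
  have tk: "take k (map s [0..<j]) = map s [0..<k]" if "k \<le> j" for k j and s :: "nat \<Rightarrow> 'n"
    using that by (simp add: take_map min_def)
  have mono: "bad (map s [0..<j])" if "bad (map s [0..<k])" "k \<le> j" for s k j
  proof -
    { fix s' assume "s' \<in> S" "map s' [0..<j] = map s [0..<j]"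
      then have "map s' [0..<k] = map s [0..<k]" using that(2) by (simp add: map_upt_eq)
      with \<open>s' \<in> S\<close> that(1) have False by (auto simp: bad_def) }
    then show ?thesis by (auto simp: bad_def)
  qed
  have "P \<in> Omega"
    unfolding Omega_def prefix_free_def
  proof (intro CollectI conjI ballI allI impI)
    show "P \<subseteq> {w. w \<noteq> []}" by (auto simp: P_def)
    fix w k assume w: "w \<in> P" and k: "k < length w"
    show "take k w \<notin> P"
    proof (cases "k = 0")
      case True then show ?thesis by (simp add: P_def)
    next
      case False
      with w k have "\<not> bad (take k w)" by (auto simp: P_def)
      then show ?thesis by (auto simp: P_def)
    qed
  qed
  moreover have "S = C omega P"
  proof
    show "S \<subseteq> C omega P"
    proof
      fix s assume "s \<in> S"
      then have "\<not> bad (map s [0..<j])" for j by (auto simp: bad_def)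
      then show "s \<in> C omega P" by (auto simp: C_omega P_def)
    qed
  next
    show "C omega P \<subseteq> S"
    proof
      fix s assume sC: "s \<in> C omega P"
      show "s \<in> S"
      proof (rule ccontr)
        assume "s \<notin> S"
        with saf obtain m where m: "\<not> (\<exists>s'\<in>S. \<forall>i<m. s' i = s i)"
          unfolding safety_def by blast
        have "bad (map s [0..<m])" unfolding bad_def
        proof
          assume "\<exists>s'\<in>S. map s' [0..<length (map s [0..<m])] = map s [0..<m]"
          then obtain s' where "s' \<in> S" "map s' [0..<m] = map s [0..<m]" by auto
          then show False using m map_upt_eq[of s' m s] by blast
        qed
        then have "bad (map s [0..<max m 1])" using mono by simp
        then have ex: "\<exists>j. 1 \<le> j \<and> bad (map s [0..<j])" by (metis max.cobounded2)
        define j where "j = (LEAST j. 1 \<le> j \<and> bad (map s [0..<j]))"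
        have j: "1 \<le> j" "bad (map s [0..<j])" using LeastI_ex[OF ex] by (auto simp: j_def)
        have jm: "\<not> bad (map s [0..<k])" if "1 \<le> k" "k < j" for k
          using not_less_Least[of k "\<lambda>j. 1 \<le> j \<and> bad (map s [0..<j])"] that by (auto simp: j_def)
        have "map s [0..<j] \<in> P" using j jm by (auto simp: P_def tk)
        with sC j show False by (auto simp: C_omega)
      qed
    qed
  qed
  ultimately show "\<exists>P\<in>Omega. S = C omega P" by blast
next
  assume "\<exists>P\<in>Omega. S = C omega P"
  then obtain P where S: "S = C omega P" by blast
  show "safety S"
    unfolding safety_def S C_omega
  proof (intro allI impI CollectI)
    fix s j assume h: "\<forall>m. \<exists>s'\<in>{s. \<forall>j\<ge>1. map s [0..<j] \<notin> P}. \<forall>i<m. s' i = s i" "1 \<le> (j::nat)"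
    from h(1) obtain s' where "\<forall>j\<ge>1. map s' [0..<j] \<notin> P" "\<forall>i<j. s' i = s i" by blast
    with h(2) show "map s [0..<j] \<notin> P" by (metis map_upt_eq)
  qed
qed

end
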